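(* Let $n\ge 5$. For every integer $k$ with $1\le k\le\lfloor\frac{n-1}{2}\rfloor$ there exists a Latin square of order $n$ with inner distance $k$. Moreover, for any Latin square $L$ of order $n$ with inner distance $k$ and any integer $k'$ with $1\le k'<k$, there is a permutation $\sigma$ of $[1,n]$ such that $\sigma(L)$ has inner distance $k'$.
   Context: Symbols are $[1,n]$. For $a,b\in[1,n]$, $\mathrm{dist}(a,b)$ is the minimum of the residues of $a-b$ and $b-a$ modulo $n$ (in $[0,n-1]$). A Latin square of order $n$ is an $n\times n$ matrix over $[1,n]$ with each symbol exactly once in every row and column; its inner distance is the minimum of $\mathrm{dist}$ over symbols in horizontally or vertically adjacent cells. For a permutation $\sigma$ of $[1,n]$, $\sigma(L)$ is obtained by applying $\sigma$ to every entry of $L$. *)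

theory Defs
  imports Main "HOL-Combinatorics.Permutations"
begin

definition cdist :: "nat \<Rightarrow> nat \<Rightarrow> nat \<Rightarrow> nat" where
  "cdist n a b = nat (min ((int a - int b) mod int n) ((int b - int a) mod int n))"

text \<open>Entries outside the index range are irrelevant.\<close>
definition latin_square :: "nat \<Rightarrow> (nat \<Rightarrow> nat \<Rightarrow> nat) \<Rightarrow> bool" where
  "latin_square n L \<longleftrightarrow>
     (\<forall>i\<in>{1..n}. bij_betw (\<lambda>j. L i j) {1..n} {1..n}) \<and>
     (\<forall>j\<in>{1..n}. bij_betw (\<lambda>i. L i j) {1..n} {1..n})"

definition adjacent_cells :: "nat \<Rightarrow> ((nat \<times> nat) \<times> (nat \<times> nat)) set" where
  "adjacent_cells n =
     {((i, j), (i, j + 1)) | i j. i \<in> {1..n} \<and> j \<in> {1..n} \<and> j + 1 \<le> n} \<union>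
     {((i, j), (i + 1, j)) | i j. i \<in> {1..n} \<and> j \<in> {1..n} \<and> i + 1 \<le> n}"

definition inner_distance :: "nat \<Rightarrow> (nat \<Rightarrow> nat \<Rightarrow> nat) \<Rightarrow> nat" where
  "inner_distance n L =
     Min ((\<lambda>((i, j), (i', j')). cdist n (L i j) (L i' j')) ` adjacent_cells n)"

end

theory Submission
  imports Defs
begin


definition gd :: "nat \<Rightarrow> int \<Rightarrow> int" where
  "gd n z = min (z mod int n) ((- z) mod int n)"

lemma cdist_gd: "cdist n a b = nat (gd n (int a - int b))"
  by (simp add: cdist_def gd_def)

lemma gd_nonneg: "n > 0 \<Longrightarrow> 0 \<le> gd n z"
  by (simp add: gd_def)

lemma gd_mod: "gd n (z mod int n) = gd n z"
  by (simp add: gd_def mod_minus_eq)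

lemma gd_cong: "z mod int n = w mod int n \<Longrightarrow> gd n z = gd n w"
  by (metis gd_mod)

lemma gd_neg: "gd n (- z) = gd n z"
  by (simp add: gd_def min.commute)

lemma gd_le_abs: assumes "n > 0" shows "gd n z \<le> \<bar>z\<bar>"
proof (cases "z \<ge> 0")
  case True
  then have "z mod int n \<le> z" by (simp add: zmod_le_nonneg_dividend)
  then show ?thesis using True by (simp add: gd_def)
next
  case False
  then have "(-z) mod int n \<le> -z" by (simp add: zmod_le_nonneg_dividend)
  then show ?thesis using False by (simp add: gd_def)
qed

lemma gd_wit: assumes "n > 0" shows "\<exists>w. w mod int n = z mod int n \<and> \<bar>w\<bar> = gd n z"
proof (cases "z mod int n \<le> (-z) mod int n")
  case True
  then show ?thesis using assms
    by (intro exI[of _ "z mod int n"]) (simp add: gd_def)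
next
  case False
  have "(- ((-z) mod int n)) mod int n = z mod int n"
    by (simp add: mod_minus_eq)
  then show ?thesis using assms False
    by (intro exI[of _ "- ((-z) mod int n)"]) (simp add: gd_def)
qed

lemma gd_tri: assumes "n > 0" shows "gd n (x + y) \<le> gd n x + gd n y"
proof -
  obtain wx where wx: "wx mod int n = x mod int n" "\<bar>wx\<bar> = gd n x" using gd_wit[OF assms] by blast
  obtain wy where wy: "wy mod int n = y mod int n" "\<bar>wy\<bar> = gd n y" using gd_wit[OF assms] by blast
  have "(x + y) mod int n = (wx + wy) mod int n"
    using wx(1) wy(1) by (metis mod_add_cong)
  then have "gd n (x + y) = gd n (wx + wy)" by (rule gd_cong)
  also have "\<dots> \<le> \<bar>wx + wy\<bar>" by (rule gd_le_abs[OF assms])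
  also have "\<dots> \<le> gd n x + gd n y" using wx(2) wy(2) by linarith
  finally show ?thesis .
qed

lemma gd_zero: "gd n 0 = 0" by (simp add: gd_def)

lemma gd_small: assumes "0 < z" "z < int n" shows "gd n z = min z (int n - z)"
proof -
  have "(- z) mod int n = int n - z"
  proof -
    have "z mod int n = z" using assms by simp
    then show ?thesis using assms by (simp add: zmod_zminus1_eq_if)
  qed
  then show ?thesis using assms by (simp add: gd_def)
qed

lemma gd_range: assumes "n > 0" shows "gd n z = 0 \<or> (0 < z mod int n \<and> gd n z = min (z mod int n) (int n - z mod int n))"
proof -
  have "0 \<le> z mod int n" "z mod int n < int n" using assms by auto
  then show ?thesis using gd_small[of "z mod int n" n] gd_mod[of n z] gd_zero[of n]
    by (cases "z mod int n = 0") auto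
qed

lemma gd_half: assumes "n > 0" shows "2 * gd n z \<le> int n"
  using gd_range[OF assms, of z] by (auto simp: min_def)

lemma gd_step: assumes "n > 0" "gd n z = k" "k \<ge> 1"
  shows "\<exists>e. (e = 1 \<or> e = -1) \<and> gd n (z - e) = k - 1"
proof -
  define y where "y = z mod int n"
  have y: "0 < y" "y < int n" "k = min y (int n - y)"
    using gd_range[OF assms(1), of z] assms y_def by auto
  show ?thesis
  proof (cases "y \<le> int n - y")
    case True
    have "gd n (z - 1) = gd n (y - 1)" using y_def by (intro gd_cong) (simp add: mod_diff_left_eq)
    also have "\<dots> = k - 1"
      using gd_small[of "y - 1" n] gd_zero[of n] y True by (cases "y = 1") auto
    finally show ?thesis by blast
  next
    case False
    have "gd n (z - (-1)) = gd n (y + 1)" using y_def by (intro gd_cong) (simp add: mod_add_left_eq)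
    also have "\<dots> = k - 1"
    proof (cases "y + 1 = int n")
      case True
      then have "gd n (y+1) = gd n 0" by (intro gd_cong) simp
      then show ?thesis using True y gd_zero[of n] by auto
    next
      case False
      then show ?thesis using gd_small[of "y + 1" n] y \<open>\<not> y \<le> int n - y\<close> by auto
    qed
    finally show ?thesis by blast
  qed
qed

lemma gd_one: assumes "n \<ge> 3" "e = 1 \<or> e = -1" shows "gd n e = 1"
  using assms gd_small[of 1 n] gd_neg[of n 1] by auto



definition dd :: "nat \<Rightarrow> (nat \<Rightarrow> nat \<Rightarrow> nat) \<Rightarrow> (nat \<times> nat) \<times> (nat \<times> nat) \<Rightarrow> nat" where
  "dd n L = (\<lambda>((i, j), (i', j')). cdist n (L i j) (L i' j'))"

lemma dd_simp: "dd n L ((i, j), (i', j')) = cdist n (L i j) (L i' j')"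
  by (simp add: dd_def)

lemma adj_fin: "finite (adjacent_cells n)"
proof -
  have "adjacent_cells n \<subseteq> ({1..n} \<times> {1..n}) \<times> ({1..n} \<times> {1..n})"
    by (auto simp: adjacent_cells_def)
  then show ?thesis by (rule finite_subset) auto
qed

lemma adj_range: "((i, j), (i', j')) \<in> adjacent_cells n \<Longrightarrow>
   i \<in> {1..n} \<and> j \<in> {1..n} \<and> i' \<in> {1..n} \<and> j' \<in> {1..n}"
  by (auto simp: adjacent_cells_def)

lemma adj_h: "i \<in> {1..n} \<Longrightarrow> j \<in> {1..n} \<Longrightarrow> j + 1 \<le> n \<Longrightarrow> ((i, j), (i, j + 1)) \<in> adjacent_cells n"
  by (auto simp: adjacent_cells_def)

lemma adj_cases: "x \<in> adjacent_cells n \<Longrightarrow>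
  (\<exists>i j. x = ((i, j), (i, j + 1)) \<and> i \<in> {1..n} \<and> j \<in> {1..n} \<and> j + 1 \<le> n) \<or>
  (\<exists>i j. x = ((i, j), (i + 1, j)) \<and> i \<in> {1..n} \<and> j \<in> {1..n} \<and> i + 1 \<le> n)"
  by (auto simp: adjacent_cells_def)

lemma inner_iff: assumes "n \<ge> 2"
  shows "inner_distance n L = k \<longleftrightarrow>
    (\<forall>x\<in>adjacent_cells n. k \<le> dd n L x) \<and> (\<exists>x\<in>adjacent_cells n. dd n L x = k)"
proof -
  have ne: "adjacent_cells n \<noteq> {}" using adj_h[of 1 n 1] assms by auto
  have "inner_distance n L = Min (dd n L ` adjacent_cells n)"
    by (simp add: inner_distance_def dd_def)
  then show ?thesis using ne adj_fin[of n] by (auto simp: Min_eq_iff)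
qed

lemma latin_range: "latin_square n L \<Longrightarrow> i \<in> {1..n} \<Longrightarrow> j \<in> {1..n} \<Longrightarrow> L i j \<in> {1..n}"
  unfolding latin_square_def by (metis bij_betw_apply)

lemma latin_comp: "latin_square n L \<Longrightarrow> \<sigma> permutes {1..n} \<Longrightarrow> latin_square n (\<lambda>i j. \<sigma> (L i j))"
  unfolding latin_square_def
proof (intro conjI ballI)
  assume a: "(\<forall>i\<in>{1..n}. bij_betw (L i) {1..n} {1..n}) \<and> (\<forall>j\<in>{1..n}. bij_betw (\<lambda>i. L i j) {1..n} {1..n})"
    and p: "\<sigma> permutes {1..n}"
  have s: "bij_betw \<sigma> {1..n} {1..n}" using p by (rule permutes_imp_bij)
  fix i assume "i \<in> {1..n}"
  then show "bij_betw (\<lambda>j. \<sigma> (L i j)) {1..n} {1..n}"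
    using bij_betw_trans[OF _ s, of "L i"] a by (simp add: o_def)
next
  assume a: "(\<forall>i\<in>{1..n}. bij_betw (L i) {1..n} {1..n}) \<and> (\<forall>j\<in>{1..n}. bij_betw (\<lambda>i. L i j) {1..n} {1..n})"
    and p: "\<sigma> permutes {1..n}"
  have s: "bij_betw \<sigma> {1..n} {1..n}" using p by (rule permutes_imp_bij)
  fix j assume "j \<in> {1..n}"
  then show "bij_betw (\<lambda>i. \<sigma> (L i j)) {1..n} {1..n}"
    using bij_betw_trans[OF _ s, of "\<lambda>i. L i j"] a by (simp add: o_def)
qed

lemma step:
  assumes n: "n \<ge> 3" and lat: "latin_square n L" and ind: "inner_distance n L = k" and k2: "k \<ge> 2"
  shows "\<exists>\<sigma>. \<sigma> permutes {1..n} \<and> inner_distance n (\<lambda>i j. \<sigma> (L i j)) = k - 1"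
proof -
  have n0: "n > 0" using n by simp
  have all: "\<forall>x\<in>adjacent_cells n. k \<le> dd n L x" and "\<exists>x\<in>adjacent_cells n. dd n L x = k"
    using inner_iff[of n L k] n ind by auto
  then obtain x0 where x0: "x0 \<in> adjacent_cells n" "dd n L x0 = k" by blast
  obtain i j i' j' where x0e: "x0 = ((i, j), (i', j'))" by (metis prod.collapse)
  define a where "a = L i j"
  define b where "b = L i' j'"
  have rng: "i \<in> {1..n} \<and> j \<in> {1..n} \<and> i' \<in> {1..n} \<and> j' \<in> {1..n}"
    using adj_range x0 x0e by blast
  have bR: "b \<in> {1..n}" using latin_range[OF lat] rng b_def by blast
  have gab: "gd n (int a - int b) = int k"
    using x0 x0e gd_nonneg[OF n0, of "int a - int b"] by (simp add: dd_simp cdist_gd a_def b_def)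
  obtain e where e: "e = 1 \<or> e = -1" "gd n (int a - int b - e) = int k - 1"
    using gd_step[OF n0 gab] k2 by auto
  define c where "c = nat ((int b - 1 + e) mod int n) + 1"
  have cint: "int c = (int b - 1 + e) mod int n + 1" using n0 c_def by simp
  have cR: "c \<in> {1..n}"
  proof -
    have "0 \<le> (int b - 1 + e) mod int n" "(int b - 1 + e) mod int n < int n" using n0 by auto
    then show ?thesis using cint by auto
  qed
  have cmod: "(int c - int b) mod int n = e mod int n"
  proof -
    have "(int c - int b) mod int n = ((int b - 1 + e) mod int n + 1 - int b) mod int n" using cint by simp
    also have "\<dots> = ((int b - 1 + e) mod int n + (1 - int b)) mod int n" by (simp add: algebra_simps)
    also have "\<dots> = ((int b - 1 + e) + (1 - int b)) mod int n" by (rule mod_add_left_eq)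
    finally show ?thesis by simp
  qed
  have gcb: "gd n (int c - int b) = 1" using gd_cong[OF cmod] gd_one[OF n e(1)] by simp
  have gbc: "gd n (int b - int c) = 1" using gcb gd_neg[of n "int c - int b"] by simp
  have amod: "(int a - int c) mod int n = (int a - int b - e) mod int n"
  proof -
    have "int n dvd (int c - int b) - e" using cmod by (simp add: mod_eq_dvd_iff)
    then have "int n dvd (int a - int c) - (int a - int b - e)"
    proof -
      have "(int a - int c) - (int a - int b - e) = - ((int c - int b) - e)" by simp
      then show ?thesis using \<open>int n dvd (int c - int b) - e\<close> by (simp only: dvd_minus_iff)
    qed
    then show ?thesis by (simp add: mod_eq_dvd_iff)
  qed
  have gac: "gd n (int a - int c) = int k - 1" using gd_cong[OF amod] e(2) by simp
  have ab: "a \<noteq> b" using gab k2 gd_zero[of n] by auto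
  have ac: "a \<noteq> c" using gac k2 gd_zero[of n] by auto
  define \<sigma> where "\<sigma> = Transposition.transpose b c"
  have perm: "\<sigma> permutes {1..n}" unfolding \<sigma>_def using bR cR by (rule permutes_swap_id)
  have sa: "\<sigma> a = a" using ab ac by (simp add: \<sigma>_def transpose_apply_other)
  have sb: "\<sigma> b = c" by (simp add: \<sigma>_def)
  have move: "gd n (int (\<sigma> x) - int x) \<le> 1" for x
  proof -
    consider "x = b" | "x = c" | "x \<noteq> b \<and> x \<noteq> c" by blast
    then show ?thesis
    proof cases
      case 1 then show ?thesis using gcb by (simp add: \<sigma>_def)
    next
      case 2 then show ?thesis using gbc by (simp add: \<sigma>_def)
    next
      case 3 then show ?thesis using gd_zero[of n] by (simp add: \<sigma>_def transpose_apply_other)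
    qed
  qed
  have key: "gd n (int (\<sigma> x) - int (\<sigma> y)) \<ge> gd n (int x - int y) - 1"
    if xy: "gd n (int x - int y) \<ge> 2" for x y
  proof -
    have fix1: "\<sigma> x = x \<or> \<sigma> y = y"
    proof (rule ccontr)
      assume "\<not> (\<sigma> x = x \<or> \<sigma> y = y)"
      then have "x \<in> {b, c}" "y \<in> {b, c}" by (auto simp: \<sigma>_def transpose_def split: if_splits)
      then have "gd n (int x - int y) \<le> 1" using gbc gcb gd_zero[of n] by auto
      then show False using xy by simp
    qed
    then show ?thesis
    proof
      assume sx: "\<sigma> x = x"
      have "gd n (int x - int y) \<le> gd n (int x - int (\<sigma> y)) + gd n (int (\<sigma> y) - int y)"
        using gd_tri[OF n0, of "int x - int (\<sigma> y)" "int (\<sigma> y) - int y"] by simp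
      then show ?thesis using move[of y] sx by simp
    next
      assume sy: "\<sigma> y = y"
      have "gd n (int x - int y) \<le> gd n (int x - int (\<sigma> x)) + gd n (int (\<sigma> x) - int y)"
        using gd_tri[OF n0, of "int x - int (\<sigma> x)" "int (\<sigma> x) - int y"] by simp
      moreover have "gd n (int x - int (\<sigma> x)) \<le> 1" using move[of x] gd_neg[of n "int (\<sigma> x) - int x"] by simp
      ultimately show ?thesis using sy by simp
    qed
  qed
  have n2: "n \<ge> 2" using n by simp
  have "inner_distance n (\<lambda>i j. \<sigma> (L i j)) = k - 1"
    unfolding inner_iff[OF n2]
  proof (intro conjI ballI)
    fix x assume x: "x \<in> adjacent_cells n"
    obtain p q p' q' where xe: "x = ((p, q), (p', q'))" by (metis prod.collapse)
    have "k \<le> dd n L x" using all x by blast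
    then have "int k \<le> gd n (int (L p q) - int (L p' q'))"
      using xe gd_nonneg[OF n0, of "int (L p q) - int (L p' q')"] by (simp add: dd_simp cdist_gd le_nat_iff)
    then have "int k - 1 \<le> gd n (int (\<sigma> (L p q)) - int (\<sigma> (L p' q')))"
      using key[of "L p q" "L p' q'"] k2 by simp
    then show "k - 1 \<le> dd n (\<lambda>i j. \<sigma> (L i j)) x"
      using xe k2 by (simp add: dd_simp cdist_gd)
  next
    show "\<exists>x\<in>adjacent_cells n. dd n (\<lambda>i j. \<sigma> (L i j)) x = k - 1"
      using x0 x0e sa sb gac k2 unfolding a_def b_def by (intro bexI[of _ x0]) (auto simp: dd_simp cdist_gd)
  qed
  then show ?thesis using perm by blast
qed

lemma part2:
  assumes n: "n \<ge> 3"
  shows "latin_square n L \<Longrightarrow> inner_distance n L = k \<Longrightarrow> 1 \<le> k' \<Longrightarrow> k' < k \<Longrightarrow>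
    \<exists>\<sigma>. \<sigma> permutes {1..n} \<and> inner_distance n (\<lambda>i j. \<sigma> (L i j)) = k'"
proof (induction k arbitrary: L)
  case 0 then show ?case by simp
next
  case (Suc k)
  obtain \<sigma>1 where s1: "\<sigma>1 permutes {1..n}" "inner_distance n (\<lambda>i j. \<sigma>1 (L i j)) = k"
    using step[OF n Suc.prems(1,2)] Suc.prems(3,4) by auto
  show ?case
  proof (cases "k = k'")
    case True then show ?thesis using s1 by blast
  next
    case False
    have lat1: "latin_square n (\<lambda>i j. \<sigma>1 (L i j))" using latin_comp[OF Suc.prems(1) s1(1)] .
    obtain \<sigma>2 where s2: "\<sigma>2 permutes {1..n}" "inner_distance n (\<lambda>i j. \<sigma>2 (\<sigma>1 (L i j))) = k'"
      using Suc.IH[OF lat1 s1(2) Suc.prems(3)] False Suc.prems(4) by auto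
    have "(\<sigma>2 \<circ> \<sigma>1) permutes {1..n}" using permutes_compose[OF s1(1) s2(1)] .
    then show ?thesis using s2(2) by (intro exI[of _ "\<sigma>2 \<circ> \<sigma>1"]) (simp add: o_def)
  qed
qed




definition rr :: "nat \<Rightarrow> nat \<Rightarrow> nat" where
  "rr n t = (if odd n then (t * (n div 2)) mod n else t div 2 + (t mod 2) * (n div 2))"

definition LL :: "nat \<Rightarrow> nat \<Rightarrow> nat \<Rightarrow> nat" where
  "LL n i j = (rr n (i - 1) + rr n (j - 1)) mod n + 1"

lemma rr_lt: assumes "n > 0" "t < n" shows "rr n t < n"
proof (cases "odd n")
  case True then show ?thesis using assms by (simp add: rr_def)
next
  case False
  then obtain h where h: "n = 2 * h" by blast
  have "t div 2 < h" using assms h by auto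
  moreover have "t mod 2 * h \<le> h" by (cases "t mod 2 = 0") auto
  moreover have "rr n t = t div 2 + t mod 2 * h" using False h by (simp add: rr_def)
  ultimately show ?thesis using h by linarith
qed

lemma rr_inj: assumes "n > 0" "t1 < n" "t2 < n" "rr n t1 = rr n t2" shows "t1 = t2"
proof (cases "odd n")
  case True
  then obtain h where h: "n = 2 * h + 1" using oddE by blast
  have hd: "n div 2 = h" using h by simp
  have "(t1 * h) mod n = (t2 * h) mod n" using assms(4) True hd by (simp add: rr_def)
  then have "(int t1 * int h) mod int n = (int t2 * int h) mod int n"
    by (metis of_nat_mult of_nat_mod)
  then have "int n dvd int t1 * int h - int t2 * int h" by (simp add: mod_eq_dvd_iff)
  then have "int n dvd (int t1 - int t2) * int h" by (simp add: algebra_simps)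
  then have "int n dvd (int t1 - int t2) * int h * 2" by simp
  moreover have "(int t1 - int t2) * int h * 2 = (int t1 - int t2) * int n - (int t1 - int t2)"
    using h by (simp add: algebra_simps)
  ultimately have d1: "int n dvd (int t1 - int t2) * int n - (int t1 - int t2)" by simp
  have d2: "int n dvd (int t1 - int t2) * int n" by simp
  have "int n dvd (int t1 - int t2) * int n - ((int t1 - int t2) * int n - (int t1 - int t2))"
    by (rule dvd_diff[OF d2 d1])
  then have "int n dvd (int t1 - int t2)" by simp
  then show ?thesis
  proof (cases "t1 = t2")
    case False
    then have "\<bar>int n\<bar> \<le> \<bar>int t1 - int t2\<bar>"
      using dvd_imp_le_int[OF _ \<open>int n dvd (int t1 - int t2)\<close>] by simp
    then show ?thesis using assms by simp
  qed simp
next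
  case False
  then obtain h where h: "n = 2 * h" by blast
  have hd: "n div 2 = h" using h by simp
  have t1: "t1 div 2 < h" "t2 div 2 < h" using assms h by auto
  have eq: "t1 div 2 + (t1 mod 2) * h = t2 div 2 + (t2 mod 2) * h" using assms(4) False hd by (simp add: rr_def)
  have m1: "t1 mod 2 = 0 \<or> t1 mod 2 = 1" and m2: "t2 mod 2 = 0 \<or> t2 mod 2 = 1" by auto
  have "t1 mod 2 = t2 mod 2"
    using m1 m2 eq t1 by (elim disjE) auto
  then have "t1 div 2 = t2 div 2" using eq by simp
  then show ?thesis using \<open>t1 mod 2 = t2 mod 2\<close> by (metis div_mult_mod_eq)
qed



lemma LL_sym: "LL n i j = LL n j i" by (simp add: LL_def add.commute)

lemma LL_row: assumes "n > 0" "i \<in> {1..n}" shows "bij_betw (\<lambda>j. LL n i j) {1..n} {1..n}"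
proof -
  have sub: "(\<lambda>j. LL n i j) ` {1..n} \<subseteq> {1..n}" using assms by (auto simp: LL_def Suc_le_eq)
  have inj: "inj_on (\<lambda>j. LL n i j) {1..n}"
  proof (rule inj_onI)
    fix j1 j2 assume j: "j1 \<in> {1..n}" "j2 \<in> {1..n}" "LL n i j1 = LL n i j2"
    then have "(int (rr n (i - 1)) + int (rr n (j1 - 1))) mod int n = (int (rr n (i - 1)) + int (rr n (j2 - 1))) mod int n"
      by (simp add: LL_def flip: of_nat_mod of_nat_add)
    then have dv: "int n dvd int (rr n (j1 - 1)) - int (rr n (j2 - 1))"
      by (simp add: mod_eq_dvd_iff)
    have lt: "rr n (j1 - 1) < n" "rr n (j2 - 1) < n" using rr_lt assms j by auto
    have "rr n (j1 - 1) = rr n (j2 - 1)"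
    proof (rule ccontr)
      assume "rr n (j1 - 1) \<noteq> rr n (j2 - 1)"
      then have "\<bar>int n\<bar> \<le> \<bar>int (rr n (j1 - 1)) - int (rr n (j2 - 1))\<bar>"
        using dvd_imp_le_int[OF _ dv] by simp
      then show False using lt by simp
    qed
    then have "j1 - 1 = j2 - 1" using rr_inj[of n "j1 - 1" "j2 - 1"] assms j by auto
    then show "j1 = j2" using j by auto
  qed
  have "(\<lambda>j. LL n i j) ` {1..n} = {1..n}" using endo_inj_surj[OF _ sub inj] by simp
  then show ?thesis using inj by (simp add: bij_betw_def)
qed

lemma LL_latin: "n > 0 \<Longrightarrow> latin_square n (LL n)"
  unfolding latin_square_def using LL_row LL_sym by (simp add: LL_row LL_sym[of n _ ])

lemma LL_gd: assumes "n > 0"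
  shows "gd n (int (LL n i j) - int (LL n i' j')) =
         gd n ((int (rr n (i - 1)) + int (rr n (j - 1))) - (int (rr n (i' - 1)) + int (rr n (j' - 1))))"
proof (rule gd_cong)
  have "int (LL n i j) = (int (rr n (i - 1)) + int (rr n (j - 1))) mod int n + 1"
    "int (LL n i' j') = (int (rr n (i' - 1)) + int (rr n (j' - 1))) mod int n + 1"
    by (simp_all add: LL_def of_nat_mod)
  then show "(int (LL n i j) - int (LL n i' j')) mod int n =
      (int (rr n (i - 1)) + int (rr n (j - 1)) - (int (rr n (i' - 1)) + int (rr n (j' - 1)))) mod int n"
    by (simp add: mod_diff_eq)
qed



lemma rr_gap: assumes "n \<ge> 5" "t + 1 < n"
  shows "int ((n - 1) div 2) \<le> gd n (int (rr n t) - int (rr n (t + 1)))"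
    and "t = 1 \<Longrightarrow> gd n (int (rr n t) - int (rr n (t + 1))) = int ((n - 1) div 2)"
proof -
  have "gd n (int (rr n t) - int (rr n (t + 1))) = int ((n - 1) div 2) \<or>
        (gd n (int (rr n t) - int (rr n (t + 1))) \<ge> int ((n - 1) div 2) \<and> t \<noteq> 1)"
  proof (cases "odd n")
    case True
    then obtain h where h: "n = 2 * h + 1" using oddE by blast
    have hd: "n div 2 = h" "(n - 1) div 2 = h" using h by auto
    have "(int (rr n t) - int (rr n (t + 1))) mod int n = (- int h) mod int n"
    proof -
      have e1: "int (rr n t) = (int t * int h) mod int n" using True hd by (simp add: rr_def of_nat_mod)
      have "int (rr n (t + 1)) = int (((t + 1) * h) mod n)" using True hd by (simp add: rr_def)
      also have "\<dots> = int ((t + 1) * h) mod int n" by (rule of_nat_mod)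
      also have "\<dots> = ((int t + 1) * int h) mod int n" by (simp only: of_nat_mult of_nat_add of_nat_1)
      finally have e2: "int (rr n (t + 1)) = ((int t + 1) * int h) mod int n" .
      have "(int (rr n t) - int (rr n (t + 1))) mod int n = (int t * int h - (int t + 1) * int h) mod int n"
        unfolding e1 e2 by (simp add: mod_diff_eq)
      then show ?thesis by (simp add: algebra_simps)
    qed
    then have "gd n (int (rr n t) - int (rr n (t + 1))) = gd n (int h)"
      using gd_cong gd_neg by metis
    also have "\<dots> = int h" using gd_small[of "int h" n] h assms by auto
    finally show ?thesis using hd by simp
  next
    case False
    then obtain h where h: "n = 2 * h" by blast
    have hd: "n div 2 = h" "(n - 1) div 2 = h - 1" using h by auto
    show ?thesis
    proof (cases "even t")
      case True
      then obtain s where s: "t = 2 * s" by blast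
      have "int (rr n t) - int (rr n (t + 1)) = - int h" using False hd s by (simp add: rr_def)
      then have "gd n (int (rr n t) - int (rr n (t + 1))) = int h"
        using gd_neg[of n "int h"] gd_small[of "int h" n] h assms by auto
      then show ?thesis using hd s by auto
    next
      case odd: False
      then obtain s where s: "t = 2 * s + 1" using oddE by blast
      have "int (rr n t) - int (rr n (t + 1)) = int h - 1" using False hd s h assms by (simp add: rr_def)
      then have "gd n (int (rr n t) - int (rr n (t + 1))) = int h - 1"
        using gd_small[of "int h - 1" n] h assms by auto
      then show ?thesis using hd h assms by auto
    qed
  qed
  then show "int ((n - 1) div 2) \<le> gd n (int (rr n t) - int (rr n (t + 1)))"
    and "t = 1 \<Longrightarrow> gd n (int (rr n t) - int (rr n (t + 1))) = int ((n - 1) div 2)" by auto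
qed



lemma LL_inner: assumes "n \<ge> 5" shows "inner_distance n (LL n) = (n - 1) div 2"
proof -
  have n0: "n > 0" "n \<ge> 2" using assms by auto
  show ?thesis unfolding inner_iff[OF n0(2)]
  proof (intro conjI ballI)
    fix x assume x: "x \<in> adjacent_cells n"
    from adj_cases[OF x] show "(n - 1) div 2 \<le> dd n (LL n) x"
    proof (elim disjE exE conjE)
      fix i j assume xe: "x = ((i, j), (i, j + 1))" and r: "i \<in> {1..n}" "j \<in> {1..n}" "j + 1 \<le> n"
      have "gd n (int (LL n i j) - int (LL n i (j + 1))) = gd n (int (rr n (j - 1)) - int (rr n (j - 1 + 1)))"
        using LL_gd[OF n0(1), of i j i "j + 1"] r by simp
      then show ?thesis using rr_gap(1)[OF assms, of "j - 1"] r xe by (simp add: dd_simp cdist_gd)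
    next
      fix i j assume xe: "x = ((i, j), (i + 1, j))" and r: "i \<in> {1..n}" "j \<in> {1..n}" "i + 1 \<le> n"
      have "gd n (int (LL n i j) - int (LL n (i + 1) j)) = gd n (int (rr n (i - 1)) - int (rr n (i - 1 + 1)))"
        using LL_gd[OF n0(1), of i j "i + 1" j] r by simp
      then show ?thesis using rr_gap(1)[OF assms, of "i - 1"] r xe by (simp add: dd_simp cdist_gd)
    qed
  next
    have x: "((1, 2), (1, 2 + 1)) \<in> adjacent_cells n" using adj_h[of 1 n 2] assms by simp
    have "gd n (int (LL n 1 2) - int (LL n 1 (2 + 1))) = gd n (int (rr n 1) - int (rr n (1 + 1)))"
      using LL_gd[OF n0(1), of 1 2 1 "2 + 1"] by (simp add: numeral_2_eq_2)
    then have "dd n (LL n) ((1, 2), (1, 2 + 1)) = (n - 1) div 2"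
      using rr_gap(2)[OF assms, of 1] assms by (simp add: dd_simp cdist_gd)
    then show "\<exists>x\<in>adjacent_cells n. dd n (LL n) x = (n - 1) div 2" using x by blast
  qed
qed


theorem mainTheorem10:
  fixes n :: nat
  assumes "n \<ge> 5"
  shows "(\<forall>k::nat. 1 \<le> k \<and> k \<le> (n - 1) div 2 \<longrightarrow>
            (\<exists>L. latin_square n L \<and> inner_distance n L = k))
       \<and> (\<forall>L k k'. latin_square n L \<and> inner_distance n L = k \<and> 1 \<le> k' \<and> k' < k \<longrightarrow>
            (\<exists>\<sigma>. \<sigma> permutes {1..n} \<and>
                  inner_distance n (\<lambda>i j. \<sigma> (L i j)) = k'))"
proof (intro conjI allI impI)
  have n3: "n \<ge> 3" and n0: "n > 0" using assms by auto
  fix k :: nat assume k: "1 \<le> k \<and> k \<le> (n - 1) div 2"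
  show "\<exists>L. latin_square n L \<and> inner_distance n L = k"
  proof (cases "k = (n - 1) div 2")
    case True
    show ?thesis
    proof (rule exI[of _ "LL n"], rule conjI)
      show "latin_square n (LL n)" by (rule LL_latin[OF n0])
      show "inner_distance n (LL n) = k" using LL_inner[OF assms] True by simp
    qed
  next
    case False
    then obtain \<sigma> where s: "\<sigma> permutes {1..n}" "inner_distance n (\<lambda>i j. \<sigma> (LL n i j)) = k"
    proof -
      have "1 \<le> k" using k by simp
      moreover have "k < (n - 1) div 2" using False k by simp
      ultimately have "\<exists>\<sigma>. \<sigma> permutes {1..n} \<and> inner_distance n (\<lambda>i j. \<sigma> (LL n i j)) = k"
        by (rule part2[OF n3 LL_latin[OF n0] LL_inner[OF assms]])
      then obtain \<tau> where "\<tau> permutes {1..n}" "inner_distance n (\<lambda>i j. \<tau> (LL n i j)) = k"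
        by blast
      then show ?thesis by (rule that)
    qed
    show ?thesis
      by (rule exI[of _ "\<lambda>i j. \<sigma> (LL n i j)"], rule conjI[OF latin_comp[OF LL_latin[OF n0] s(1)] s(2)])
  qed
next
  have n3: "n \<ge> 3" using assms by auto
  fix L k k' assume h: "latin_square n L \<and> inner_distance n L = k \<and> 1 \<le> k' \<and> k' < k"
  have h1: "latin_square n L" and h2: "inner_distance n L = k" and h3: "1 \<le> k'" and h4: "k' < k"
    using h by simp_all
  show "\<exists>\<sigma>. \<sigma> permutes {1..n} \<and> inner_distance n (\<lambda>i j. \<sigma> (L i j)) = k'"
    by (rule part2[OF n3 h1 h2 h3 h4])
qed

end
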